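(* Let $a\in\{1,2\}$ and let $K=\partial_a^{-1}+\sum_{j\ge1}\partial_{3-a}^{-j}V_j$, with $V_j\in\mathcal B((\partial_a^{-1}))$, be the operator satisfying $HK=\partial_{3-a}$ (i.e. $K=\iota_{\partial_{3-a}^{-1}}H^{-1}\partial_{3-a}$). Then for every $k\ge1$, $$\pi_a(\partial_{3-a}^k)=(\partial_{3-a}^k K)_{3-a,[0]}\,\partial_a=\sum_{j=1}^k\partial_{3-a}^{k-j}(V_j)\,\partial_a,$$ where $\partial_{3-a}^{k-j}(V_j)$ denotes $V_j$ with each coefficient differentiated $k-j$ times with respect to $x_{3-a}$, and $(\cdot)_{3-a,[0]}$ is the coefficient of $\partial_{3-a}^0$ after writing the operator in normal order (all $\partial_{3-a}$ to the right of coefficients and $\partial_a$-powers).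
   Context: $\mathcal B$ is an algebra of functions of $\mathbf t$ (including $x_1,x_2$), $\partial_a=\partial/\partial x_a$, $\rho\in\mathcal B$, $H=\partial_1\partial_2+\rho$. $\mathcal E_{(a)}=\mathcal B[\partial_{3-a}]((\partial_a^{-1}))$ (operators $\sum_{i\le M}\sum_{0\le j\le N}b_{ij}\partial_a^i\partial_{3-a}^j$, commuting $\partial_1,\partial_2$, Leibniz composition), $\mathcal E^0_{(a)}=\mathcal B((\partial_a^{-1}))$; $\mathcal E_{(a)}=\mathcal E^0_{(a)}\oplus\mathcal E_{(a)}H$ and $\pi_a$ is the projection onto $\mathcal E^0_{(a)}$ along $\mathcal E_{(a)}H$. The operator $K$ lives in the ring of formal series $\sum_{j\le N}\partial_{3-a}^jP_j$, $P_j\in\mathcal B((\partial_a^{-1}))$; the equation $HK=\partial_{3-a}$ determines the $V_j$ recursively, e.g. for $a=1$: $V_1=-\partial_1^{-1}\rho\partial_1^{-1}$, $V_{j+1}=-\sum_{l=0}^{j-1}\binom{j-1}{l}\partial_1^{-1}\partial_2^l(\rho)V_{j-l}$. *)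

theory Defs
  imports Main "HOL-Library.Groups_Big_Fun"
begin

text \<open>
  The algebra B is modelled as a commutative ring 'b carrying two
  commuting derivations d1 = d/dx_1 and d2 = d/dx_2.
  For a in {1,2}, an operator sum c(i,j) * D_a^i * D_(3-a)^j (i, j integers,
  coefficients written to the LEFT of all derivative powers: the normal order)
  is represented by its coefficient function c :: int => int => 'b.
  Such formal sums need not have finite support (e.g. K).
\<close>

type_synonym 'b opr = "int \<Rightarrow> int \<Rightarrow> 'b"

definition is_derivation :: "('b::comm_ring_1 \<Rightarrow> 'b) \<Rightarrow> bool" where
  "is_derivation d \<longleftrightarrow> (\<forall>x y. d (x + y) = d x + d y) \<and> (\<forall>x y. d (x * y) = d x * y + x * d y)"

definition ibinom :: "int \<Rightarrow> nat \<Rightarrow> int" where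
  "ibinom i m = (if 0 \<le> i then int (nat i choose m)
                 else (-1) ^ m * int ((nat (- i) + m - 1) choose m))"

definition dA :: "nat \<Rightarrow> ('b \<Rightarrow> 'b) \<Rightarrow> ('b \<Rightarrow> 'b) \<Rightarrow> 'b \<Rightarrow> 'b" where
  "dA a d1 d2 = (if a = 1 then d1 else d2)"

definition dB :: "nat \<Rightarrow> ('b \<Rightarrow> 'b) \<Rightarrow> ('b \<Rightarrow> 'b) \<Rightarrow> 'b \<Rightarrow> 'b" where
  "dB a d1 d2 = (if a = 1 then d2 else d1)"

text \<open>Composition by the Leibniz rule:
  D_a^i D_b^j y = sum_{m,l} binom(i,m) binom(j,l) (d_a^m d_b^l y) D_a^(i-m) D_b^(j-l).
  The sum is finite in every case in which the composition is defined
  (products inside E_(a), and left multiplication of arbitrary formal sums by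
  differential operators / by D_b^(-j) applied to elements of B((D_a^-1))).\<close>
definition opmul :: "nat \<Rightarrow> ('b::comm_ring_1 \<Rightarrow> 'b) \<Rightarrow> ('b \<Rightarrow> 'b) \<Rightarrow> 'b opr \<Rightarrow> 'b opr \<Rightarrow> 'b opr" where
  "opmul a d1 d2 X Y = (\<lambda>p q. Sum_any (\<lambda>(i::int, j::int, m::nat, l::nat).
      X i j * of_int (ibinom i m) * of_int (ibinom j l) *
      (dA a d1 d2 ^^ m) ((dB a d1 d2 ^^ l) (Y (p - i + int m) (q - j + int l)))))"

definition mono :: "int \<Rightarrow> int \<Rightarrow> 'b::comm_ring_1 opr" where
  "mono i j = (\<lambda>p q. if p = i \<and> q = j then 1 else 0)"

definition opadd :: "'b::comm_ring_1 opr \<Rightarrow> 'b opr \<Rightarrow> 'b opr" where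
  "opadd X Y = (\<lambda>p q. X p q + Y p q)"

definition opsub :: "'b::comm_ring_1 opr \<Rightarrow> 'b opr \<Rightarrow> 'b opr" where
  "opsub X Y = (\<lambda>p q. X p q - Y p q)"

definition Hop :: "'b::comm_ring_1 \<Rightarrow> 'b opr" where
  "Hop \<rho> = opadd (mono 1 1) (\<lambda>p q. if p = 0 \<and> q = 0 then \<rho> else 0)"

text \<open>E_(a) = B[D_(3-a)]((D_a^-1)).\<close>
definition Eset :: "'b::comm_ring_1 opr set" where
  "Eset = {c. \<exists>M N. \<forall>i j. c i j \<noteq> 0 \<longrightarrow> i \<le> M \<and> 0 \<le> j \<and> j \<le> N}"

text \<open>E^0_(a) = B((D_a^-1)).\<close>
definition E0set :: "'b::comm_ring_1 opr set" where
  "E0set = {c \<in> Eset. \<forall>i j. j \<noteq> 0 \<longrightarrow> c i j = 0}"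

definition proj :: "nat \<Rightarrow> ('b::comm_ring_1 \<Rightarrow> 'b) \<Rightarrow> ('b \<Rightarrow> 'b) \<Rightarrow> 'b \<Rightarrow> 'b opr \<Rightarrow> 'b opr" where
  "proj a d1 d2 \<rho> X = (THE Y. Y \<in> E0set \<and> (\<exists>Z \<in> Eset. opsub X Y = opmul a d1 d2 Z (Hop \<rho>)))"

definition Kop :: "nat \<Rightarrow> ('b::comm_ring_1 \<Rightarrow> 'b) \<Rightarrow> ('b \<Rightarrow> 'b) \<Rightarrow> (nat \<Rightarrow> 'b opr) \<Rightarrow> 'b opr" where
  "Kop a d1 d2 V = (\<lambda>p q. mono (-1) 0 p q +
      Sum_any (\<lambda>j::nat. if 1 \<le> j then opmul a d1 d2 (mono 0 (- int j)) (V j) p q else 0))"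

definition coef0 :: "'b::comm_ring_1 opr \<Rightarrow> 'b opr" where
  "coef0 X = (\<lambda>p q. if q = 0 then X p 0 else 0)"

definition dcoef :: "nat \<Rightarrow> ('b::comm_ring_1 \<Rightarrow> 'b) \<Rightarrow> ('b \<Rightarrow> 'b) \<Rightarrow> nat \<Rightarrow> 'b opr \<Rightarrow> 'b opr" where
  "dcoef a d1 d2 n V = (\<lambda>p q. (dB a d1 d2 ^^ n) (V p q))"

end

theory Submission
  imports Defs "HOL-Computational_Algebra.Formal_Power_Series"
begin


lemma ibinom_rat: "(of_int (ibinom i m) :: rat) = (of_int i) gchoose m"
proof (cases "0 \<le> i")
  case True
  then obtain n where "i = int n" by (metis nonneg_eq_int)
  then show ?thesis using True by (simp add: ibinom_def binomial_gbinomial)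
next
  case False
  define n where "n = nat (- i)"
  have n: "i = - int n" "n \<ge> 1" using False by (auto simp: n_def)
  have "(of_int i :: rat) gchoose m = (-1)^m * ((of_nat n + of_nat m - 1) gchoose m)"
    using n by (simp add: gbinomial_minus)
  also have "(of_nat n + of_nat m - 1 :: rat) = of_nat (n + m - 1)" using n by simp
  finally show ?thesis using n False by (simp add: ibinom_def binomial_gbinomial)
qed

lemma ibinom_pascal: "ibinom (i + 1) (Suc m) = ibinom i m + ibinom i (Suc m)"
proof -
  have "(of_int (ibinom (i + 1) (Suc m)) :: rat) = of_int (ibinom i m + ibinom i (Suc m))"
    by (simp add: ibinom_rat gbinomial_Suc_Suc)
  then show ?thesis by (simp only: of_int_eq_iff)
qed

lemma ibinom_0 [simp]: "ibinom i 0 = 1" by (simp add: ibinom_def)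
lemma ibinom_zero_Suc [simp]: "ibinom 0 (Suc m) = 0" by (simp add: ibinom_def)
lemma ibinom_zero_pos: "m > 0 \<Longrightarrow> ibinom 0 m = 0" by (cases m) auto
lemma ibinom_nat: "ibinom (int n) m = int (n choose m)" by (simp add: ibinom_def)
lemma ibinom_big: "0 \<le> j \<Longrightarrow> j < int l \<Longrightarrow> ibinom j l = 0" by (simp add: ibinom_def)
lemma ibinom_one: "ibinom 1 m = (if m \<le> 1 then 1 else 0)"
  using ibinom_nat[of 1 m] by (cases m) (auto simp: binomial_eq_0)
lemma ibinom_m1: "ibinom (-1) m = (-1)^m" by (simp add: ibinom_def)

lemma ibinom_vander:
  assumes "1 \<le> j" "j \<le> k"
  shows "(\<Sum>l\<in>{0..k-j}. int (k choose l) * ibinom (- int j) (k - j - l)) = 1"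
proof -
  have "(of_int (\<Sum>l\<in>{0..k-j}. int (k choose l) * ibinom (- int j) (k - j - l)) :: rat)
      = (\<Sum>l\<in>{0..k-j}. (of_nat k gchoose l) * (of_int (- int j) gchoose (k - j - l)))"
    by (simp add: ibinom_rat binomial_gbinomial)
  also have "\<dots> = (of_nat k + of_int (- int j)) gchoose (k - j)" by (rule gbinomial_Vandermonde)
  also have "(of_nat k + of_int (- int j) :: rat) = of_nat (k - j)" using assms by simp
  also have "(of_nat (k - j) :: rat) gchoose (k - j) = 1" by (simp add: binomial_gbinomial[symmetric])
  finally have "(of_int (\<Sum>l\<in>{0..k-j}. int (k choose l) * ibinom (- int j) (k - j - l)) :: rat) = 1" .
  then show ?thesis by (simp only: of_int_eq_1_iff)
qed




context fixes d :: "'b::comm_ring_1 \<Rightarrow> 'b" assumes der: "is_derivation d"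
begin
lemma der_add: "d (x + y) = d x + d y" using der by (simp add: is_derivation_def)
lemma der_mult: "d (x * y) = d x * y + x * d y" using der by (simp add: is_derivation_def)
lemma der_0: "d 0 = 0" using der_add[of 0 0] by simp
lemma der_1: "d 1 = 0" using der_mult[of 1 1] by simp
lemma der_uminus: "d (- x) = - d x" using der_add[of x "-x"] der_0 by (simp add: add_eq_0_iff2)
lemma der_diff: "d (x - y) = d x - d y" using der_add[of x "-y"] der_uminus[of y] by simp
lemma der_of_nat: "d (of_nat n) = 0" by (induction n) (auto simp: der_add der_0 der_1)
lemma der_of_int: "d (of_int c) = 0"
proof (cases "0 \<le> c")
  case True then show ?thesis by (metis der_of_nat of_int_of_nat_eq nonneg_eq_int)
next
  case False then obtain n where "c = - int n" by (metis le_cases neg_0_le_iff_le nonneg_eq_int add.inverse_inverse)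
  then show ?thesis by (simp add: der_uminus der_of_nat)
qed
lemma der_of_int_mult: "d (of_int c * x) = of_int c * d x" by (simp add: der_mult der_of_int)
lemma der_sum: "d (sum f A) = (\<Sum>a\<in>A. d (f a))"
  by (induction A rule: infinite_finite_induct) (auto simp: der_0 der_add)

lemma ders_add: "(d^^n) (x + y) = (d^^n) x + (d^^n) y" by (induction n) (auto simp: der_add)
lemma ders_0: "(d^^n) 0 = 0" by (induction n) (auto simp: der_0)
lemma ders_uminus: "(d^^n) (- x) = - (d^^n) x" by (induction n) (auto simp: der_uminus)
lemma ders_diff: "(d^^n) (x - y) = (d^^n) x - (d^^n) y" by (induction n) (auto simp: der_diff)
lemma ders_of_int_mult: "(d^^n) (of_int c * x) = of_int c * (d^^n) x"
  by (induction n) (auto simp: der_of_int_mult)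
lemma ders_sum: "(d^^n) (sum f A) = (\<Sum>a\<in>A. (d^^n) (f a))"
  by (induction n) (auto simp: der_sum)
lemma ders_1: "n > 0 \<Longrightarrow> (d^^n) 1 = 0"
  by (induction n) (auto simp: der_1 der_0 ders_0 simp del: funpow.simps(2) simp add: funpow_Suc_right)
lemma ders_if: "(d^^n) (if P then x else 0) = (if P then (d^^n) x else 0)" by (simp add: ders_0)
end

lemma funpow_comm: "(\<And>x. f (g x) = g (f x)) \<Longrightarrow> f ((g^^n) x) = (g^^n) (f x)"
  by (induction n) auto

locale dd =
  fixes D E :: "'b::comm_ring_1 \<Rightarrow> 'b"
  assumes dD: "is_derivation D" and dE: "is_derivation E" and DE: "\<And>x. D (E x) = E (D x)"
begin
lemma ED_pow: "E ((D^^m) x) = (D^^m) (E x)" by (rule funpow_comm) (simp add: DE)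
lemma DE_pow: "D ((E^^m) x) = (E^^m) (D x)" by (rule funpow_comm) (simp add: DE)
end




definition bnd :: "int \<Rightarrow> (int \<Rightarrow> 'b::zero) \<Rightarrow> bool" where
  "bnd M X \<longleftrightarrow> (\<forall>p>M. X p = 0)"

lemma bnd_mono: "bnd M X \<Longrightarrow> M \<le> M' \<Longrightarrow> bnd M' X" by (auto simp: bnd_def)

lemma Sum_any_nat: "(\<And>m::nat. B \<le> m \<Longrightarrow> f m = 0) \<Longrightarrow> Sum_any f = (\<Sum>m<B. f m)"
  apply (rule Sum_any.expand_superset)
   apply (rule finite_lessThan)
proof
  fix x assume "x \<in> {a. f a \<noteq> 0}" "\<And>m::nat. B \<le> m \<Longrightarrow> f m = 0"
  then show "x \<in> {..<B}" by (cases "B \<le> x") auto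
qed

lemma Sum_any_zero': "(\<And>m. f m = 0) \<Longrightarrow> Sum_any f = 0"
  by (simp add: Sum_any.expand_set)

context dd
begin

definition rmul :: "(int \<Rightarrow> 'b) \<Rightarrow> 'b \<Rightarrow> int \<Rightarrow> 'b" where
  "rmul X r p = Sum_any (\<lambda>m::nat. X (p + int m) * of_int (ibinom (p + int m) m) * (D^^m) r)"

definition ainv :: "(int \<Rightarrow> 'b) \<Rightarrow> int \<Rightarrow> 'b" where
  "ainv X p = Sum_any (\<lambda>m::nat. (-1)^m * (D^^m) (X (p + 1 + int m)))"

definition lda :: "(int \<Rightarrow> 'b) \<Rightarrow> int \<Rightarrow> 'b" where
  "lda X p = X (p - 1) + D (X p)"

lemma rmul_fin: "bnd M X \<Longrightarrow> nat (M - p + 1) \<le> B \<Longrightarrow>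
   rmul X r p = (\<Sum>m<B. X (p + int m) * of_int (ibinom (p + int m) m) * (D^^m) r)"
  unfolding rmul_def by (rule Sum_any_nat) (auto simp: bnd_def)

lemma ainv_fin: "bnd M X \<Longrightarrow> nat (M - p) \<le> B \<Longrightarrow>
   ainv X p = (\<Sum>m<B. (-1)^m * (D^^m) (X (p + 1 + int m)))"
  unfolding ainv_def by (rule Sum_any_nat) (auto simp: bnd_def ders_0[OF dD])

lemma bnd_rmul: "bnd M X \<Longrightarrow> bnd M (rmul X r)"
  unfolding bnd_def rmul_def by (auto intro!: Sum_any_zero')

lemma bnd_ainv: "bnd M X \<Longrightarrow> bnd (M - 1) (ainv X)"
  unfolding bnd_def ainv_def by (auto intro!: Sum_any_zero' simp: ders_0[OF dD])

lemma bnd_lda: "bnd M X \<Longrightarrow> bnd (M + 1) (lda X)"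
  unfolding bnd_def lda_def by (auto simp: der_0[OF dD])

lemma rmul_zero: "rmul (\<lambda>_. 0) r p = 0"
  unfolding rmul_def by (auto intro!: Sum_any_zero')

lemma ainv_zero: "ainv (\<lambda>_. 0) p = 0"
  unfolding ainv_def by (auto intro!: Sum_any_zero' simp: ders_0[OF dD])

lemma rmul_add: "bnd M X \<Longrightarrow> bnd M Y \<Longrightarrow> rmul (\<lambda>p. X p + Y p) r p = rmul X r p + rmul Y r p"
proof -
  assume a: "bnd M X" "bnd M Y"
  then have b: "bnd M (\<lambda>p. X p + Y p)" by (auto simp: bnd_def)
  show ?thesis
    using rmul_fin[OF a(1) order.refl] rmul_fin[OF a(2) order.refl] rmul_fin[OF b order.refl]
    by (simp add: sum.distrib algebra_simps)
qed

lemma rmul_diff: "bnd M X \<Longrightarrow> bnd M Y \<Longrightarrow> rmul (\<lambda>p. X p - Y p) r p = rmul X r p - rmul Y r p"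
proof -
  assume a: "bnd M X" "bnd M Y"
  then have b: "bnd M (\<lambda>p. X p - Y p)" by (auto simp: bnd_def)
  show ?thesis
    using rmul_fin[OF a(1) order.refl] rmul_fin[OF a(2) order.refl] rmul_fin[OF b order.refl]
    by (simp add: sum_subtractf algebra_simps)
qed

lemma rmul_uminus: "bnd M X \<Longrightarrow> rmul (\<lambda>p. - X p) r p = - rmul X r p"
proof -
  assume a: "bnd M X"
  then have b: "bnd M (\<lambda>p. - X p)" by (auto simp: bnd_def)
  show ?thesis
    using rmul_fin[OF a(1) order.refl] rmul_fin[OF b order.refl]
    by (simp add: sum_negf)
qed

lemma rmul_scal: "bnd M X \<Longrightarrow> rmul (\<lambda>p. c * X p) r p = c * rmul X r p"
proof -
  assume a: "bnd M X"
  then have b: "bnd M (\<lambda>p. c * X p)" by (auto simp: bnd_def)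
  show ?thesis
    using rmul_fin[OF a(1) order.refl] rmul_fin[OF b order.refl]
    by (simp add: sum_distrib_left algebra_simps)
qed

lemma rmul_radd: "bnd M X \<Longrightarrow> rmul X (r + s) p = rmul X r p + rmul X s p"
proof -
  assume a: "bnd M X"
  show ?thesis
    using rmul_fin[OF a(1) order.refl, of r] rmul_fin[OF a(1) order.refl, of s]
      rmul_fin[OF a(1) order.refl, of "r+s"]
    by (simp add: sum.distrib algebra_simps ders_add[OF dD])
qed

lemma ainv_add: "bnd M X \<Longrightarrow> bnd M Y \<Longrightarrow> ainv (\<lambda>p. X p + Y p) p = ainv X p + ainv Y p"
proof -
  assume a: "bnd M X" "bnd M Y"
  then have b: "bnd M (\<lambda>p. X p + Y p)" by (auto simp: bnd_def)
  show ?thesis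
    using ainv_fin[OF a(1) order.refl] ainv_fin[OF a(2) order.refl] ainv_fin[OF b order.refl]
    by (simp add: sum.distrib distrib_left ders_add[OF dD])
qed

lemma ainv_diff: "bnd M X \<Longrightarrow> bnd M Y \<Longrightarrow> ainv (\<lambda>p. X p - Y p) p = ainv X p - ainv Y p"
proof -
  assume a: "bnd M X" "bnd M Y"
  then have b: "bnd M (\<lambda>p. X p - Y p)" by (auto simp: bnd_def)
  show ?thesis
    using ainv_fin[OF a(1) order.refl] ainv_fin[OF a(2) order.refl] ainv_fin[OF b order.refl]
    by (simp add: sum_subtractf right_diff_distrib ders_diff[OF dD])
qed

lemma ainv_uminus: "bnd M X \<Longrightarrow> ainv (\<lambda>p. - X p) p = - ainv X p"
proof -
  assume a: "bnd M X"
  then have b: "bnd M (\<lambda>p. - X p)" by (auto simp: bnd_def)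
  show ?thesis
    using ainv_fin[OF a(1) order.refl] ainv_fin[OF b order.refl]
    by (simp add: sum_negf ders_uminus[OF dD])
qed

lemma ainv_shift: "ainv (\<lambda>p. X (p - 1)) p = ainv X (p - 1)"
  unfolding ainv_def by (rule Sum_any.cong) (simp add: algebra_simps)

lemma der_m1pow: "is_derivation d \<Longrightarrow> d ((-1)^m * y) = (-1)^m * d y"
proof -
  assume "is_derivation d"
  then have "d (of_int ((-1)^m) * y) = of_int ((-1)^m) * d y" by (rule der_of_int_mult)
  then show ?thesis by simp
qed

lemma der_mult3: "is_derivation d \<Longrightarrow> d (x * of_int c * y) = d x * of_int c * y + x * of_int c * d y"
  by (simp add: der_mult der_of_int algebra_simps)

lemma lda_ainv: "bnd M X \<Longrightarrow> lda (ainv X) p = X p"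
proof -
  assume a: "bnd M X"
  define B where "B = nat (M - p + 1)"
  have 1: "ainv X (p - 1) = (\<Sum>m<Suc B. (-1)^m * (D^^m) (X (p - 1 + 1 + int m)))"
    by (rule ainv_fin[OF a]) (simp add: B_def)
  have 2: "ainv X p = (\<Sum>m<B. (-1)^m * (D^^m) (X (p + 1 + int m)))"
    by (rule ainv_fin[OF a]) (simp add: B_def)
  have 3: "D (ainv X p) = (\<Sum>m<B. (-1)^m * (D^^Suc m) (X (p + 1 + int m)))"
    unfolding 2 by (simp add: der_sum[OF dD] der_m1pow[OF dD])
  have 4: "ainv X (p - 1) = X p + (\<Sum>m<B. - ((-1)^m * (D^^Suc m) (X (p + 1 + int m))))"
    unfolding 1 sum.lessThan_Suc_shift by (simp add: algebra_simps)
  show ?thesis unfolding lda_def 3 4 by (simp add: sum_negf)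
qed

lemma lda_inj: assumes a: "bnd M Y" and z: "\<And>p. lda Y p = 0" shows "Y p = 0"
proof -
  have *: "Y (M + 1 - int n) = 0" for n
  proof (induction n)
    case 0 then show ?case using a by (simp add: bnd_def)
  next
    case (Suc n)
    have "lda Y (M + 1 - int n) = 0" by (rule z)
    then have "Y (M + 1 - int n - 1) = 0" using Suc by (simp add: lda_def der_0[OF dD])
    then show ?case by (simp add: algebra_simps)
  qed
  show ?thesis
  proof (cases "p > M")
    case True then show ?thesis using a by (simp add: bnd_def)
  next
    case False
    then have "p = M + 1 - int (nat (M + 1 - p))" by simp
    then show ?thesis using *[of "nat (M + 1 - p)"] by simp
  qed
qed

end



context dd
begin

lemma lda_rmul: assumes a: "bnd M Y" shows "lda (rmul Y r) p = rmul (lda Y) r p"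
proof -
  define B where "B = nat (M - p + 2)"
  define t where "t m = Y (p + int m) * of_int (ibinom (p + int m) m) * (D^^Suc m) r" for m
  have r1: "rmul Y r (p - 1) = (\<Sum>m<Suc B. Y (p - 1 + int m) * of_int (ibinom (p - 1 + int m) m) * (D^^m) r)"
    by (rule rmul_fin[OF a]) (simp add: B_def)
  have r1': "rmul Y r (p - 1) = Y (p - 1) * r + (\<Sum>m<B. Y (p + int m) * of_int (ibinom (p + int m) (Suc m)) * (D^^Suc m) r)"
    unfolding r1 sum.lessThan_Suc_shift by (simp add: algebra_simps)
  have r2: "rmul Y r p = (\<Sum>m<Suc B. Y (p + int m) * of_int (ibinom (p + int m) m) * (D^^m) r)"
    by (rule rmul_fin[OF a]) (simp add: B_def)
  have r2': "D (rmul Y r p) = (\<Sum>m<Suc B. D (Y (p + int m)) * of_int (ibinom (p + int m) m) * (D^^m) r)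
      + (\<Sum>m<Suc B. t m)"
    unfolding r2 t_def der_sum[OF dD] by (simp add: der_mult3[OF dD] sum.distrib del: sum.lessThan_Suc)
  have tB: "t B = 0" unfolding t_def using a by (simp add: bnd_def B_def)
  have r2'': "(\<Sum>m<Suc B. t m) = (\<Sum>m<B. t m)" using tB by simp
  have a': "bnd (M + 1) (lda Y)" by (rule bnd_lda[OF a])
  have r3: "rmul (lda Y) r p = (\<Sum>m<Suc B. lda Y (p + int m) * of_int (ibinom (p + int m) m) * (D^^m) r)"
    by (rule rmul_fin[OF a']) (simp add: B_def)
  have r3': "rmul (lda Y) r p = (\<Sum>m<Suc B. Y (p + int m - 1) * of_int (ibinom (p + int m) m) * (D^^m) r)
     + (\<Sum>m<Suc B. D (Y (p + int m)) * of_int (ibinom (p + int m) m) * (D^^m) r)"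
    unfolding r3 lda_def by (simp add: sum.distrib algebra_simps)
  have pas: "ibinom (p + int m + 1) (Suc m) = ibinom (p + int m) m + ibinom (p + int m) (Suc m)" for m
    by (rule ibinom_pascal)
  have pas2: "ibinom (1 + (p + int m)) (Suc m) = ibinom (p + int m) m + ibinom (p + int m) (Suc m)" for m
    using pas[of m] by (simp add: add.commute)
  have r3'': "(\<Sum>m<Suc B. Y (p + int m - 1) * of_int (ibinom (p + int m) m) * (D^^m) r)
     = Y (p - 1) * r + (\<Sum>m<B. Y (p + int m) * of_int (ibinom (p + int m) (Suc m)) * (D^^Suc m) r) + (\<Sum>m<B. t m)"
    unfolding sum.lessThan_Suc_shift t_def
    by (simp add: pas pas2 sum.distrib algebra_simps)
  show ?thesis unfolding lda_def r1' r2' r2'' r3' r3'' by (simp add: algebra_simps)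
qed

lemma bnd_diff: "bnd M (X::int\<Rightarrow>'b) \<Longrightarrow> bnd M Y \<Longrightarrow> bnd M (\<lambda>p. X p - Y p)" by (auto simp: bnd_def)
lemma bnd_add: "bnd M (X::int\<Rightarrow>'b) \<Longrightarrow> bnd M Y \<Longrightarrow> bnd M (\<lambda>p. X p + Y p)" by (auto simp: bnd_def)
lemma bnd_uminus: "bnd M (X::int\<Rightarrow>'b) \<Longrightarrow> bnd M (\<lambda>p. - X p)" by (auto simp: bnd_def)
lemma bnd_scal: "bnd M (X::int\<Rightarrow>'b) \<Longrightarrow> bnd M (\<lambda>p. c * X p)" by (auto simp: bnd_def)
lemma bnd_E: "bnd M X \<Longrightarrow> bnd M (\<lambda>p. E (X p))" by (auto simp: bnd_def der_0[OF dE])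
lemma bnd_Es: "bnd M X \<Longrightarrow> bnd M (\<lambda>p. (E^^n) (X p))" by (auto simp: bnd_def ders_0[OF dE])
lemma bnd_zero: "bnd M (\<lambda>_::int. 0::'b)" by (auto simp: bnd_def)
lemma bnd_sum: "(\<And>i. i \<in> A \<Longrightarrow> bnd M (X i :: int \<Rightarrow> 'b)) \<Longrightarrow> bnd M (\<lambda>p. \<Sum>i\<in>A. X i p)" by (auto simp: bnd_def)

lemma ainv_rmul: assumes a: "bnd M W" shows "ainv (rmul W r) p = rmul (ainv W) r p"
proof -
  define Y where "Y p = ainv (rmul W r) p - rmul (ainv W) r p" for p
  have b1: "bnd (M - 1) (ainv (rmul W r))" by (rule bnd_ainv[OF bnd_rmul[OF a]])
  have b2: "bnd (M - 1) (rmul (ainv W) r)" by (rule bnd_rmul[OF bnd_ainv[OF a]])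
  have bY: "bnd (M - 1) Y" unfolding Y_def by (rule bnd_diff[OF b1 b2])
  have "lda Y q = 0" for q
  proof -
    have "lda Y q = lda (ainv (rmul W r)) q - lda (rmul (ainv W) r) q"
      by (simp add: lda_def Y_def der_diff[OF dD])
    also have "lda (ainv (rmul W r)) q = rmul W r q" by (rule lda_ainv[OF bnd_rmul[OF a]])
    also have "lda (rmul (ainv W) r) q = rmul (lda (ainv W)) r q" by (rule lda_rmul[OF bnd_ainv[OF a]])
    also have "lda (ainv W) = W" using lda_ainv[OF a] by auto
    finally show ?thesis by simp
  qed
  then have "Y p = 0" by (rule lda_inj[OF bY])
  then show ?thesis by (simp add: Y_def)
qed

lemma E_rmul: assumes a: "bnd M X" shows "E (rmul X r p) = rmul (\<lambda>p. E (X p)) r p + rmul X (E r) p"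
proof -
  have b: "bnd M (\<lambda>p. E (X p))" by (rule bnd_E[OF a])
  show ?thesis
    using rmul_fin[OF a order.refl, where r=r] rmul_fin[OF a order.refl, where r="E r"] rmul_fin[OF b order.refl, where r=r]
    by (simp add: der_sum[OF dE] der_mult3[OF dE] sum.distrib ED_pow)
qed

lemma scal_rmul: assumes a: "bnd M X" shows "c * rmul X r p = rmul (\<lambda>p. c * X p) r p"
  using rmul_scal[OF a] by simp

end



context dd
begin

definition Tm :: "'b \<Rightarrow> (int \<Rightarrow> 'b) \<Rightarrow> int \<Rightarrow> 'b" where
  "Tm \<rho> X p = - E (X p) - ainv (\<lambda>q. \<rho> * X q) p"

lemma bnd_Tm: "bnd M X \<Longrightarrow> bnd M (Tm \<rho> X)"
  unfolding Tm_def
  by (rule bnd_diff[OF bnd_uminus[OF bnd_E]], assumption, rule bnd_mono[OF bnd_ainv[OF bnd_scal]], auto)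

lemma Tm_zero: "Tm \<rho> (\<lambda>_. 0) p = 0"
  unfolding Tm_def using ainv_zero by (simp add: der_0[OF dE])

lemma Tm_shift: "Tm \<rho> (\<lambda>p. X (p - 1)) p = Tm \<rho> X (p - 1)"
  unfolding Tm_def using ainv_shift[of "\<lambda>q. \<rho> * X q" p] by simp

lemma Tm_add: assumes "bnd M X" "bnd M Y"
  shows "Tm \<rho> (\<lambda>p. X p + Y p) p = Tm \<rho> X p + Tm \<rho> Y p"
proof -
  have "ainv (\<lambda>q. \<rho> * (X q + Y q)) p = ainv (\<lambda>q. \<rho> * X q) p + ainv (\<lambda>q. \<rho> * Y q) p"
    using ainv_add[OF bnd_scal[OF assms(1)] bnd_scal[OF assms(2)], of \<rho> \<rho> p] by (simp add: distrib_left)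
  then show ?thesis unfolding Tm_def by (simp add: der_add[OF dE])
qed

lemma Tm_scal: assumes "bnd M X"
  shows "Tm \<rho> (\<lambda>p. of_int c * X p) p = of_int c * Tm \<rho> X p"
proof -
  have "ainv (\<lambda>q. \<rho> * (of_int c * X q)) p = ainv (\<lambda>q. of_int c * (\<rho> * X q)) p"
    by (simp add: algebra_simps)
  also have "\<dots> = of_int c * ainv (\<lambda>q. \<rho> * X q) p"
    using ainv_fin[OF bnd_scal[OF bnd_scal[OF assms, of \<rho>], of "of_int c"] order.refl]
      ainv_fin[OF bnd_scal[OF assms, of \<rho>] order.refl]
    using ders_of_int_mult[OF dD, of _ c]
    by (simp add: sum_distrib_left mult.left_commute[of \<rho>] mult.left_commute[of _ "(-1)^_"])
  finally show ?thesis unfolding Tm_def by (simp add: der_of_int_mult[OF dE] algebra_simps)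
qed

lemma Tm_sum: assumes "finite A" "\<And>i. i \<in> A \<Longrightarrow> bnd M (X i)"
  shows "Tm \<rho> (\<lambda>p. \<Sum>i\<in>A. X i p) p = (\<Sum>i\<in>A. Tm \<rho> (X i) p)"
  using assms
proof (induction A arbitrary: p rule: finite_induct)
  case empty then show ?case using Tm_zero by simp
next
  case (insert x F)
  have "Tm \<rho> (\<lambda>p. \<Sum>i\<in>insert x F. X i p) p = Tm \<rho> (\<lambda>p. X x p + (\<Sum>i\<in>F. X i p)) p"
    using insert by simp
  also have "\<dots> = Tm \<rho> (X x) p + Tm \<rho> (\<lambda>p. \<Sum>i\<in>F. X i p) p"
    by (rule Tm_add) (use insert in \<open>auto intro: bnd_sum\<close>)
  finally show ?case using insert by simp
qed

lemma Tm_rmul: assumes a: "bnd M X"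
  shows "Tm \<rho> (rmul X r) p = rmul (Tm \<rho> X) r p - rmul X (E r) p"
proof -
  have 1: "(\<lambda>q. \<rho> * rmul X r q) = rmul (\<lambda>q. \<rho> * X q) r"
    using scal_rmul[OF a] by auto
  have 2: "ainv (rmul (\<lambda>q. \<rho> * X q) r) p = rmul (ainv (\<lambda>q. \<rho> * X q)) r p"
    by (rule ainv_rmul[OF bnd_scal[OF a]])
  have b1: "bnd M (\<lambda>q. - E (X q))" by (rule bnd_uminus[OF bnd_E[OF a]])
  have b2: "bnd M (ainv (\<lambda>q. \<rho> * X q))" by (rule bnd_mono[OF bnd_ainv[OF bnd_scal[OF a]]]) simp
  have 3: "rmul (Tm \<rho> X) r p = - rmul (\<lambda>q. E (X q)) r p - rmul (ainv (\<lambda>q. \<rho> * X q)) r p"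
    unfolding Tm_def[abs_def] using rmul_diff[OF b1 b2] rmul_uminus[OF bnd_E[OF a]] by simp
  show ?thesis unfolding Tm_def[of \<rho> "rmul X r"] 1 2 3 E_rmul[OF a] by simp
qed

end



lemma Sum_any_supp: "finite S \<Longrightarrow> (\<And>t. f t \<noteq> 0 \<Longrightarrow> t \<in> S) \<Longrightarrow> Sum_any f = sum f S"
  by (rule Sum_any.expand_superset) auto

context dd
begin

definition opm :: "'b opr \<Rightarrow> 'b opr \<Rightarrow> 'b opr" where
  "opm X Y = (\<lambda>p q. Sum_any (\<lambda>(i::int, j::int, m::nat, l::nat).
      X i j * of_int (ibinom i m) * of_int (ibinom j l) *
      (D^^m) ((E^^l) (Y (p - i + int m) (q - j + int l)))))"

lemma Hop_val: "Hop \<rho> i j = (if i = 1 \<and> j = 1 then 1 else 0) + (if i = 0 \<and> j = 0 then \<rho> else 0)"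
  by (simp add: Hop_def opadd_def mono_def)

lemma ibinom_one_nz: "ibinom 1 m \<noteq> 0 \<Longrightarrow> m \<le> 1"
  by (simp add: ibinom_one split: if_splits)

lemma ibinom_zero_nz: "ibinom 0 m \<noteq> 0 \<Longrightarrow> m = 0"
  using ibinom_zero_pos by (cases m) auto

lemma opm_H: "opm (Hop \<rho>) X p q = X (p-1) (q-1) + D (X p (q-1)) + E (X (p-1) q) + D (E (X p q)) + \<rho> * X p q"
proof -
  define S where "S = ({(1,1,0,0),(1,1,0,1),(1,1,1,0),(1,1,1,1),(0,0,0,0)} :: (int\<times>int\<times>nat\<times>nat) set)"
  define f where "f = (\<lambda>(i::int, j::int, m::nat, l::nat).
      Hop \<rho> i j * of_int (ibinom i m) * of_int (ibinom j l) *
      (D^^m) ((E^^l) (X (p - i + int m) (q - j + int l))))"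
  have supp: "t \<in> S" if "f t \<noteq> 0" for t
  proof -
    obtain i j m l where t: "t = (i, j, m, l)" by (cases t) auto
    have nz: "Hop \<rho> i j \<noteq> 0" "ibinom i m \<noteq> 0" "ibinom j l \<noteq> 0" using that t f_def by auto
    then have "(i = 1 \<and> j = 1) \<or> (i = 0 \<and> j = 0)" by (auto simp: Hop_val split: if_splits)
    then show ?thesis
    proof
      assume "i = 1 \<and> j = 1"
      then have "m \<le> 1" "l \<le> 1" using nz ibinom_one_nz by auto
      then have "m = 0 \<or> m = 1" "l = 0 \<or> l = 1" by auto
      then show ?thesis using \<open>i = 1 \<and> j = 1\<close> t S_def by auto
    next
      assume "i = 0 \<and> j = 0"
      then have "m = 0" "l = 0" using nz ibinom_zero_nz by auto
      then show ?thesis using \<open>i = 0 \<and> j = 0\<close> t S_def by auto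
    qed
  qed
  have "opm (Hop \<rho>) X p q = sum f S"
    unfolding opm_def f_def[symmetric] by (rule Sum_any_supp[OF _ supp]) (auto simp: S_def)
  also have "\<dots> = f (1,1,0,0) + (f (1,1,0,1) + (f (1,1,1,0) + (f (1,1,1,1) + f (0,0,0,0))))"
    by (simp add: S_def)
  also have "f (1,1,0,0) = X (p-1) (q-1)" by (simp add: f_def Hop_val)
  also have "f (1,1,0,1) = E (X (p-1) q)" by (simp add: f_def Hop_val ibinom_one)
  also have "f (1,1,1,0) = D (X p (q-1))" by (simp add: f_def Hop_val ibinom_one)
  also have "f (1,1,1,1) = D (E (X p q))" by (simp add: f_def Hop_val ibinom_one)
  also have "f (0,0,0,0) = \<rho> * X p q" by (simp add: f_def Hop_val)
  finally show ?thesis by (simp add: algebra_simps)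
qed


lemma opm_monoBk: "opm (mono 0 (int k)) X p q = (\<Sum>l\<le>k. of_nat (k choose l) * (E^^l) (X p (q - int k + int l)))"
proof -
  define f where "f = (\<lambda>(i::int, j::int, m::nat, l::nat).
      mono 0 (int k) i j * of_int (ibinom i m) * of_int (ibinom j l) *
      (D^^m) ((E^^l) (X (p - i + int m) (q - j + int l))))"
  define g where "g (l::nat) = (0::int, int k, 0::nat, l)" for l
  have supp: "t \<in> g ` {..k}" if "f t \<noteq> 0" for t
  proof -
    obtain i j m l where t: "t = (i, j, m, l)" by (cases t) auto
    have nz: "mono 0 (int k) i j \<noteq> (0::'b)" "ibinom i m \<noteq> 0" "ibinom j l \<noteq> 0" using that t f_def by auto
    then have ij: "i = 0" "j = int k" by (auto simp: mono_def split: if_splits)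
    then have "m = 0" using nz ibinom_zero_nz by auto
    moreover have "l \<le> k" using nz(3) ij by (simp add: ibinom_nat binomial_eq_0_iff)
    ultimately show ?thesis using t ij g_def by auto
  qed
  have "opm (mono 0 (int k)) X p q = sum f (g ` {..k})"
    unfolding opm_def f_def[symmetric] by (rule Sum_any_supp[OF _ supp]) auto
  also have "\<dots> = sum (f \<circ> g) {..k}" by (rule sum.reindex) (auto simp: inj_on_def g_def)
  also have "\<dots> = (\<Sum>l\<le>k. of_nat (k choose l) * (E^^l) (X p (q - int k + int l)))"
    by (rule sum.cong) (auto simp: f_def g_def mono_def ibinom_nat)
  finally show ?thesis .
qed

lemma opm_monoA: "opm Z (mono 1 0) p q = Z (p - 1) q"
proof -
  define f where "f = (\<lambda>(i::int, j::int, m::nat, l::nat).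
      Z i j * of_int (ibinom i m) * of_int (ibinom j l) *
      (D^^m) ((E^^l) ((mono 1 0 :: 'b opr) (p - i + int m) (q - j + int l))))"
  have supp: "t \<in> {(p - 1, q, 0, 0)}" if "f t \<noteq> 0" for t
  proof -
    obtain i j m l where t: "t = (i, j, m, l)" by (cases t) auto
    have nz: "(D^^m) ((E^^l) ((mono 1 0 :: 'b opr) (p - i + int m) (q - j + int l))) \<noteq> 0"
      using that t f_def by auto
    then have c: "p - i + int m = 1" "q - j + int l = 0"
      by (auto simp: mono_def ders_0[OF dD] ders_0[OF dE] split: if_splits)
    have "m = 0"
    proof (rule ccontr)
      assume "m \<noteq> 0" then show False using nz c
        by (cases "l = 0") (simp_all add: mono_def ders_1[OF dD] ders_1[OF dE] ders_0[OF dD])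
    qed
    moreover have "l = 0"
    proof (rule ccontr)
      assume "l \<noteq> 0" then show False using nz c by (simp add: mono_def ders_1[OF dE] ders_0[OF dD])
    qed
    ultimately show ?thesis using t c by auto
  qed
  have "opm Z (mono 1 0) p q = sum f {(p - 1, q, 0, 0)}"
    unfolding opm_def f_def[symmetric] by (rule Sum_any_supp[OF _ supp]) auto
  also have "\<dots> = Z (p - 1) q" by (simp add: f_def mono_def)
  finally show ?thesis .
qed

end



context dd
begin

lemma opm_ZH: assumes Zb: "\<And>i j. Z i j \<noteq> 0 \<Longrightarrow> i \<le> M \<and> 0 \<le> j \<and> j \<le> N"
  shows "opm Z (Hop \<rho>) p q = Z (p-1) (q-1) +
    (\<Sum>l<nat (N - q + 1). of_int (ibinom (q + int l) l) * rmul (\<lambda>p'. Z p' (q + int l)) ((E^^l) \<rho>) p)"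
proof -
  define B1 where "B1 = nat (M - p + 1)"
  define B2 where "B2 = nat (N - q + 1)"
  define f1 where "f1 = (\<lambda>(i::int, j::int, m::nat, l::nat).
      Z i j * of_int (ibinom i m) * of_int (ibinom j l) *
      (D^^m) ((E^^l) (if p - i + int m = 1 \<and> q - j + int l = 1 then 1 else 0)))"
  define f2 where "f2 = (\<lambda>(i::int, j::int, m::nat, l::nat).
      Z i j * of_int (ibinom i m) * of_int (ibinom j l) *
      (D^^m) ((E^^l) (if p - i + int m = 0 \<and> q - j + int l = 0 then \<rho> else 0)))"
  define g where "g = (\<lambda>(l::nat, m::nat). (p + int m, q + int l, m, l))"
  have split: "opm Z (Hop \<rho>) p q = Sum_any (\<lambda>t. f1 t + f2 t)"
    unfolding opm_def f1_def f2_def Hop_val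
    by (rule Sum_any.cong) (auto simp: ders_add[OF dD] ders_add[OF dE] distrib_left)
  have s1: "t \<in> {(p - 1, q - 1, 0, 0)}" if "f1 t \<noteq> 0" for t
  proof -
    obtain i j m l where t: "t = (i, j, m, l)" by (cases t) auto
    have nz: "(D^^m) ((E^^l) (if p - i + int m = 1 \<and> q - j + int l = 1 then 1 else (0::'b))) \<noteq> 0"
      using that t f1_def by auto
    then have c: "p - i + int m = 1" "q - j + int l = 1"
      by (auto simp: ders_0[OF dD] ders_0[OF dE] split: if_splits)
    have "m = 0"
    proof (rule ccontr)
      assume "m \<noteq> 0" then show False using nz c
        by (cases "l = 0") (simp_all add: ders_1[OF dD] ders_1[OF dE] ders_0[OF dD])
    qed
    moreover have "l = 0"
    proof (rule ccontr)
      assume "l \<noteq> 0" then show False using nz c by (simp add: ders_1[OF dE] ders_0[OF dD])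
    qed
    ultimately show ?thesis using t c by auto
  qed
  have s2: "t \<in> g ` ({..<B2} \<times> {..<B1})" if "f2 t \<noteq> 0" for t
  proof -
    obtain i j m l where t: "t = (i, j, m, l)" by (cases t) auto
    have nz: "(D^^m) ((E^^l) (if p - i + int m = 0 \<and> q - j + int l = 0 then \<rho> else 0)) \<noteq> 0" "Z i j \<noteq> 0"
      using that t f2_def by auto
    then have c: "p - i + int m = 0" "q - j + int l = 0"
      by (auto simp: ders_0[OF dD] ders_0[OF dE] split: if_splits)
    have b: "i \<le> M" "j \<le> N" using Zb[OF nz(2)] by auto
    have "l < B2" "m < B1" using b c by (auto simp: B1_def B2_def)
    moreover have "t = g (l, m)" using t c by (auto simp: g_def)
    ultimately show ?thesis by auto
  qed
  have fin1: "finite {t. f1 t \<noteq> 0}" by (rule finite_subset[of _ "{(p - 1, q - 1, 0, 0)}"]) (use s1 in auto)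
  have fin2: "finite {t. f2 t \<noteq> 0}" by (rule finite_subset[of _ "g ` ({..<B2} \<times> {..<B1})"]) (use s2 in auto)
  have "Sum_any (\<lambda>t. f1 t + f2 t) = Sum_any f1 + Sum_any f2" by (rule Sum_any.distrib[OF fin1 fin2])
  also have "Sum_any f1 = sum f1 {(p - 1, q - 1, 0, 0)}" by (rule Sum_any_supp[OF _ s1]) auto
  also have "\<dots> = Z (p - 1) (q - 1)" by (simp add: f1_def)
  also have "Sum_any f2 = sum f2 (g ` ({..<B2} \<times> {..<B1}))" by (rule Sum_any_supp[OF _ s2]) auto
  also have "\<dots> = sum (f2 \<circ> g) ({..<B2} \<times> {..<B1})" by (rule sum.reindex) (auto simp: inj_on_def g_def)
  also have "\<dots> = (\<Sum>l<B2. \<Sum>m<B1. f2 (g (l, m)))" by (simp add: sum.cartesian_product)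
  also have "\<dots> = (\<Sum>l<B2. of_int (ibinom (q + int l) l) * rmul (\<lambda>p'. Z p' (q + int l)) ((E^^l) \<rho>) p)"
  proof (rule sum.cong[OF refl])
    fix l assume "l \<in> {..<B2}"
    have bl: "bnd M (\<lambda>p'. Z p' (q + int l))" unfolding bnd_def using Zb by force
    show "(\<Sum>m<B1. f2 (g (l, m))) = of_int (ibinom (q + int l) l) * rmul (\<lambda>p'. Z p' (q + int l)) ((E^^l) \<rho>) p"
      unfolding rmul_fin[OF bl order.refl] B1_def
      by (simp add: f2_def g_def sum_distrib_left algebra_simps)
  qed
  finally show ?thesis unfolding split B2_def .
qed

lemma opm_negB: assumes W0: "\<And>p q. q \<noteq> 0 \<Longrightarrow> W p q = 0"
  shows "opm (mono 0 (- int j)) W p q = (if q + int j \<le> 0 then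
     of_int (ibinom (- int j) (nat (- q - int j))) * (E^^nat (- q - int j)) (W p 0) else 0)"
proof -
  define f where "f = (\<lambda>(i::int, i2::int, m::nat, l::nat).
      mono 0 (- int j) i i2 * of_int (ibinom i m) * of_int (ibinom i2 l) *
      (D^^m) ((E^^l) (W (p - i + int m) (q - i2 + int l))))"
  have supp: "t \<in> {(0, - int j, 0, nat (- q - int j))}" if "f t \<noteq> 0" for t
  proof -
    obtain i i2 m l where t: "t = (i, i2, m, l)" by (cases t) auto
    have nz: "mono 0 (- int j) i i2 \<noteq> (0::'b)" "ibinom i m \<noteq> 0"
       "(D^^m) ((E^^l) (W (p - i + int m) (q - i2 + int l))) \<noteq> 0"
      using that t f_def by auto
    then have ij: "i = 0" "i2 = - int j" by (auto simp: mono_def split: if_splits)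
    then have "m = 0" using nz ibinom_zero_nz by auto
    moreover have "q - i2 + int l = 0"
    proof (rule ccontr)
      assume "q - i2 + int l \<noteq> 0" then show False using nz(3) W0 by (simp add: ders_0[OF dD] ders_0[OF dE])
    qed
    ultimately show ?thesis using t ij by auto
  qed
  have "opm (mono 0 (- int j)) W p q = sum f {(0, - int j, 0, nat (- q - int j))}"
    unfolding opm_def f_def[symmetric] by (rule Sum_any_supp[OF _ supp]) auto
  also have "\<dots> = of_int (ibinom (- int j) (nat (- q - int j))) * (E^^nat (- q - int j)) (W p (q + int j + int (nat (- q - int j))))"
    by (simp add: f_def mono_def)
  also have "\<dots> = (if q + int j \<le> 0 then
     of_int (ibinom (- int j) (nat (- q - int j))) * (E^^nat (- q - int j)) (W p 0) else 0)"
    using W0[of "q + int j" p] by (auto simp: ders_0[OF dE])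
  finally show ?thesis .
qed

definition Kf :: "(nat \<Rightarrow> 'b opr) \<Rightarrow> 'b opr" where
  "Kf V = (\<lambda>p q. mono (-1) 0 p q +
      Sum_any (\<lambda>j::nat. if 1 \<le> j then opm (mono 0 (- int j)) (V j) p q else 0))"

lemma Kf_closed: assumes V0: "\<And>j p q. 1 \<le> j \<Longrightarrow> q \<noteq> 0 \<Longrightarrow> V j p q = 0"
  shows "Kf V p q = (if p = -1 \<and> q = 0 then 1 else 0) +
     (\<Sum>j\<in>{1..nat (-q)}. of_int (ibinom (- int j) (nat (-q) - j)) * (E^^(nat (-q) - j)) (V j p 0))"
proof -
  define g where "g j = (if 1 \<le> j then opm (mono 0 (- int j)) (V j) p q else 0)" for j
  have gj: "g j = (if 1 \<le> j \<and> q + int j \<le> 0 then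
     of_int (ibinom (- int j) (nat (- q - int j))) * (E^^nat (- q - int j)) (V j p 0) else 0)" for j
    unfolding g_def using opm_negB[of "V j" j p q] V0[of j] by auto
  have supp: "j \<in> {1..nat (-q)}" if "g j \<noteq> 0" for j
    using that unfolding gj by (auto split: if_splits)
  have "Sum_any g = sum g {1..nat (-q)}" by (rule Sum_any_supp[OF _ supp]) auto
  also have "\<dots> = (\<Sum>j\<in>{1..nat (-q)}. of_int (ibinom (- int j) (nat (-q) - j)) * (E^^(nat (-q) - j)) (V j p 0))"
  proof (rule sum.cong[OF refl])
    fix j assume "j \<in> {1..nat (-q)}"
    then have "1 \<le> j" "q + int j \<le> 0" "nat (- q - int j) = nat (-q) - j" by auto
    then show "g j = of_int (ibinom (- int j) (nat (-q) - j)) * (E^^(nat (-q) - j)) (V j p 0)"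
      unfolding gj by simp
  qed
  finally show ?thesis unfolding Kf_def g_def mono_def by simp
qed

end



lemma tele: "(\<Sum>l<Suc B. of_int (ibinom (s - 1 + int l) l) * (a l :: 'b::comm_ring_1)) =
   (\<Sum>l<Suc B. of_int (ibinom (s + int l) l) * a l) - (\<Sum>l<B. of_int (ibinom (s + int l) l) * a (Suc l))"
proof (induction B)
  case 0 then show ?case by simp
next
  case (Suc B)
  have p: "ibinom (s + int B + 1) (Suc B) = ibinom (s + int B) B + ibinom (s + int B) (Suc B)"
    by (rule ibinom_pascal)
  have "(\<Sum>l<Suc (Suc B). of_int (ibinom (s - 1 + int l) l) * a l) =
     (\<Sum>l<Suc B. of_int (ibinom (s - 1 + int l) l) * a l) + of_int (ibinom (s + int B) (Suc B)) * a (Suc B)"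
    by (simp add: algebra_simps)
  also have "\<dots> = (\<Sum>l<Suc (Suc B). of_int (ibinom (s + int l) l) * a l) - (\<Sum>l<Suc B. of_int (ibinom (s + int l) l) * a (Suc l))"
    unfolding Suc.IH using p by (simp add: algebra_simps)
  finally show ?case .
qed

locale ddK = dd D E for D E :: "'b::comm_ring_1 \<Rightarrow> 'b" +
  fixes \<rho> :: 'b and V :: "nat \<Rightarrow> 'b opr"
  assumes V0: "\<And>j p q. 1 \<le> j \<Longrightarrow> q \<noteq> 0 \<Longrightarrow> V j p q = 0"
    and Vb: "\<And>j. 1 \<le> j \<Longrightarrow> \<exists>M. \<forall>p q. V j p q \<noteq> 0 \<longrightarrow> p \<le> M"
    and HK: "\<And>p q. opm (Hop \<rho>) (Kf V) p q = mono 0 1 p q"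
begin

abbreviation "K \<equiv> Kf V"

lemma Kcl: "K p q = (if p = -1 \<and> q = 0 then 1 else 0) +
     (\<Sum>j\<in>{1..nat (-q)}. of_int (ibinom (- int j) (nat (-q) - j)) * (E^^(nat (-q) - j)) (V j p 0))"
  by (rule Kf_closed[OF V0])

lemma Kpos: "q > 0 \<Longrightarrow> K p q = 0" by (simp add: Kcl)
lemma K0: "K p 0 = (if p = -1 then 1 else 0)" by (simp add: Kcl)

lemma Vbn: "\<exists>M. \<forall>j\<in>{1..n}. \<forall>p>M. V j p 0 = 0"
proof (induction n)
  case 0 then show ?case by simp
next
  case (Suc n)
  then obtain M where M: "\<forall>j\<in>{1..n}. \<forall>p>M. V j p 0 = 0" by blast
  obtain M' where M': "\<forall>p q. V (Suc n) p q \<noteq> 0 \<longrightarrow> p \<le> M'" using Vb[of "Suc n"] by auto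
  have "\<forall>j\<in>{1..Suc n}. \<forall>p>max M M'. V j p 0 = 0"
  proof (intro ballI allI impI)
    fix j p assume j: "j \<in> {1..Suc n}" and p: "p > max M M'"
    show "V j p 0 = 0"
    proof (cases "j = Suc n")
      case True then show ?thesis using M' p by force
    next
      case False then show ?thesis using M j p by auto
    qed
  qed
  then show ?case by blast
qed

lemma Kb: "\<exists>M. bnd M (\<lambda>p. K p q)"
proof -
  obtain M where M: "\<forall>j\<in>{1..nat (-q)}. \<forall>p>M. V j p 0 = 0" using Vbn by blast
  have "bnd (max M 0) (\<lambda>p. K p q)"
    unfolding bnd_def Kcl using M by (auto simp: ders_0[OF dE])
  then show ?thesis by blast
qed

lemma HKc: "K (p-1) (q-1) + D (K p (q-1)) + E (K (p-1) q) + D (E (K p q)) + \<rho> * K p q = mono 0 1 p q"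
  using HK[of p q] opm_H[of \<rho> K p q] by simp

lemma Krec: assumes q: "q \<le> 0" shows "K p (q - 1) = Tm \<rho> (\<lambda>p. K p q) p"
proof -
  obtain M1 where M1: "bnd M1 (\<lambda>p. K p (q - 1))" using Kb by blast
  obtain M2 where M2: "bnd M2 (\<lambda>p. K p q)" using Kb by blast
  define M where "M = max M1 M2"
  have b1: "bnd M (\<lambda>p. K p (q - 1))" by (rule bnd_mono[OF M1]) (simp add: M_def)
  have b2: "bnd M (\<lambda>p. K p q)" by (rule bnd_mono[OF M2]) (simp add: M_def)
  define A where "A = ainv (\<lambda>p'. \<rho> * K p' q)"
  have bA: "bnd M A" unfolding A_def by (rule bnd_mono[OF bnd_ainv[OF bnd_scal[OF b2]]]) simp
  have lA: "A (p' - 1) + D (A p') = \<rho> * K p' q" for p'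
    using lda_ainv[OF bnd_scal[OF b2], of \<rho> p'] unfolding A_def lda_def by simp
  define Y where "Y p = K p (q - 1) + E (K p q) + A p" for p
  have bY: "bnd M Y" unfolding Y_def by (intro bnd_add bnd_E b1 b2 bA)
  have "lda Y p' = 0" for p'
  proof -
    have "lda Y p' = K (p'-1) (q-1) + D (K p' (q-1)) + E (K (p'-1) q) + D (E (K p' q)) + (A (p' - 1) + D (A p'))"
      unfolding lda_def Y_def by (simp add: der_add[OF dD] algebra_simps)
    also have "\<dots> = mono 0 1 p' q" unfolding lA HKc by simp
    finally show ?thesis using q by (simp add: mono_def)
  qed
  then have "Y p = 0" by (rule lda_inj[OF bY])
  then show ?thesis unfolding Y_def Tm_def A_def by (simp add: algebra_simps eq_neg_iff_add_eq_0)
qed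

lemma Kbu: "bnd (-1) (\<lambda>p. K p q)"
proof (cases "q > 0")
  case True then show ?thesis by (simp add: bnd_def Kpos)
next
  case False
  have "bnd (-1) (\<lambda>p. K p (- int n))" for n
  proof (induction n)
    case 0 then show ?case by (simp add: bnd_def K0)
  next
    case (Suc n)
    have e: "- int (Suc n) = - int n - 1" by simp
    have "(\<lambda>p. K p (- int (Suc n))) = Tm \<rho> (\<lambda>p. K p (- int n))"
      unfolding e using Krec[of "- int n"] by auto
    then show ?case using bnd_Tm[OF Suc.IH] by simp
  qed
  from this[of "nat (-q)"] False show ?thesis by simp
qed

definition RI :: "'b opr \<Rightarrow> int \<Rightarrow> int \<Rightarrow> 'b" where
  "RI X s p = X (p - 1) s + Sum_any (\<lambda>l::nat. of_int (ibinom (s + int l) l) *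
      rmul (\<lambda>p'. X p' (s + int l + 1)) ((E^^l) \<rho>) p)"

lemma RI_fin: assumes "\<And>p q. q > N \<Longrightarrow> X p q = 0" "nat (N - s) \<le> B"
  shows "RI X s p = X (p - 1) s + (\<Sum>l<B. of_int (ibinom (s + int l) l) *
      rmul (\<lambda>p'. X p' (s + int l + 1)) ((E^^l) \<rho>) p)"
  unfolding RI_def
proof (rule arg_cong[where f="\<lambda>x. _ + x"], rule Sum_any_nat)
  fix l assume "B \<le> l"
  then have "(\<lambda>p'. X p' (s + int l + 1)) = (\<lambda>_. 0)" using assms by auto
  then show "of_int (ibinom (s + int l) l) * rmul (\<lambda>p'. X p' (s + int l + 1)) ((E^^l) \<rho>) p = 0"
    by (simp add: rmul_zero)
qed

lemma RIK_base: "RI K (-1) p = 0"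
proof -
  have "RI K (-1) p = K (p - 1) (-1) + (\<Sum>l<1. of_int (ibinom (-1 + int l) l) *
      rmul (\<lambda>p'. K p' (-1 + int l + 1)) ((E^^l) \<rho>) p)"
    by (rule RI_fin[of 0]) (auto simp: Kpos)
  also have "\<dots> = K (p - 1) (-1) + rmul (\<lambda>p'. K p' 0) \<rho> p" by simp
  also have "K (p - 1) (-1) = Tm \<rho> (\<lambda>p. K p 0) (p - 1)" using Krec[of 0 "p - 1"] by simp
  also have "\<dots> = - ainv (\<lambda>q. \<rho> * K q 0) (p - 1)" by (simp add: Tm_def K0 der_0[OF dE] der_1[OF dE])
  also have "ainv (\<lambda>q. \<rho> * K q 0) (p - 1) = rmul (\<lambda>p'. K p' 0) \<rho> p"
    unfolding ainv_def rmul_def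
    by (rule Sum_any.cong) (auto simp: K0 ibinom_m1 ders_0[OF dD])
  finally show ?thesis by simp
qed

lemma RIK_step: assumes s: "s \<le> -1" shows "RI K (s - 1) p = Tm \<rho> (RI K s) p"
proof -
  define n where "n = nat (- s)"
  have n1: "n \<ge> 1" and sn: "s = - int n" using s by (auto simp: n_def)
  define a where "a l = rmul (\<lambda>p'. K p' (s + int l)) ((E^^l) \<rho>)" for l
  define b where "b l = rmul (\<lambda>p'. K p' (s + int l + 1)) ((E^^l) \<rho>)" for l
  have RIs: "RI K s = (\<lambda>p. K (p - 1) s + (\<Sum>l<n. of_int (ibinom (s + int l) l) * b l p))"
  proof
    fix p
    have "RI K s p = K (p - 1) s + (\<Sum>l<n. of_int (ibinom (s + int l) l) *
      rmul (\<lambda>p'. K p' (s + int l + 1)) ((E^^l) \<rho>) p)"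
      by (rule RI_fin[of 0]) (auto simp: Kpos n_def)
    then show "RI K s p = K (p - 1) s + (\<Sum>l<n. of_int (ibinom (s + int l) l) * b l p)"
      by (simp add: b_def)
  qed
  have ba: "bnd 0 (a l)" for l unfolding a_def by (rule bnd_rmul[OF bnd_mono[OF Kbu]]) simp
  have bb: "bnd 0 (b l)" for l unfolding b_def by (rule bnd_rmul[OF bnd_mono[OF Kbu]]) simp
  have "RI K (s - 1) p = K (p - 1) (s - 1) + (\<Sum>l<Suc n. of_int (ibinom (s - 1 + int l) l) *
      rmul (\<lambda>p'. K p' (s - 1 + int l + 1)) ((E^^l) \<rho>) p)"
    by (rule RI_fin[of 0]) (auto simp: Kpos n_def)
  also have "\<dots> = K (p - 1) (s - 1) + (\<Sum>l<Suc n. of_int (ibinom (s - 1 + int l) l) * a l p)"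
    by (simp add: a_def)
  also have "(\<Sum>l<Suc n. of_int (ibinom (s - 1 + int l) l) * a l p) =
     (\<Sum>l<Suc n. of_int (ibinom (s + int l) l) * a l p) - (\<Sum>l<n. of_int (ibinom (s + int l) l) * a (Suc l) p)"
    by (rule tele)
  also have "(\<Sum>l<Suc n. of_int (ibinom (s + int l) l) * a l p) = (\<Sum>l<n. of_int (ibinom (s + int l) l) * a l p)"
    using n1 sn by (simp add: ibinom_zero_pos)
  finally have L: "RI K (s - 1) p = K (p - 1) (s - 1) + ((\<Sum>l<n. of_int (ibinom (s + int l) l) * a l p) -
      (\<Sum>l<n. of_int (ibinom (s + int l) l) * a (Suc l) p))" .
  have Ta: "Tm \<rho> (b l) p = a l p - a (Suc l) p" if "l < n" for l
  proof -
    have "Tm \<rho> (b l) p = rmul (Tm \<rho> (\<lambda>p'. K p' (s + int l + 1))) ((E^^l) \<rho>) p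
        - rmul (\<lambda>p'. K p' (s + int l + 1)) (E ((E^^l) \<rho>)) p"
      unfolding b_def using Tm_rmul[OF Kbu] by simp
    also have "Tm \<rho> (\<lambda>p'. K p' (s + int l + 1)) = (\<lambda>p'. K p' (s + int l))"
      using Krec[of "s + int l + 1"] that n_def s by auto
    moreover have e: "(\<lambda>p'. K p' (s + int (Suc l))) = (\<lambda>p'. K p' (s + int l + 1))" by (simp add: algebra_simps)
    ultimately show ?thesis unfolding a_def e by simp
  qed
  have bs: "bnd 0 (\<lambda>p. \<Sum>l<n. of_int (ibinom (s + int l) l) * b l p)"
    by (intro bnd_sum bnd_scal bb)
  have bk: "bnd 0 (\<lambda>p. K (p - 1) s)" using Kbu[of s] by (auto simp: bnd_def)
  have "Tm \<rho> (RI K s) p = Tm \<rho> (\<lambda>p. K (p - 1) s) p + Tm \<rho> (\<lambda>p. \<Sum>l<n. of_int (ibinom (s + int l) l) * b l p) p"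
    unfolding RIs by (rule Tm_add[OF bk bs])
  also have "Tm \<rho> (\<lambda>p. K (p - 1) s) p = K (p - 1) (s - 1)"
    using Tm_shift[of \<rho> "\<lambda>p. K p s" p] Krec[of s "p - 1"] s by simp
  also have "Tm \<rho> (\<lambda>p. \<Sum>l<n. of_int (ibinom (s + int l) l) * b l p) p =
      (\<Sum>l<n. Tm \<rho> (\<lambda>p. of_int (ibinom (s + int l) l) * b l p) p)"
    by (rule Tm_sum) (auto intro: bnd_scal bb)
  also have "\<dots> = (\<Sum>l<n. of_int (ibinom (s + int l) l) * (a l p - a (Suc l) p))"
    by (rule sum.cong[OF refl]) (simp add: Tm_scal[OF bb] Ta)
  finally show ?thesis unfolding L by (simp add: right_diff_distrib sum_subtractf)
qed

lemma RIK: "RI K s p = (if s = 0 \<and> p = 0 then 1 else 0)"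
proof -
  consider "s \<ge> 0" | "s \<le> -1" by linarith
  then show ?thesis
  proof cases
    case 1
    have "RI K s p = K (p - 1) s + (\<Sum>l<0. of_int (ibinom (s + int l) l) *
      rmul (\<lambda>p'. K p' (s + int l + 1)) ((E^^l) \<rho>) p)"
      by (rule RI_fin[of 0]) (use 1 in \<open>auto simp: Kpos\<close>)
    then show ?thesis using 1 by (cases "s = 0") (auto simp: K0 Kpos)
  next
    case 2
    have "\<forall>p. RI K (-1 - int n) p = 0" for n
    proof (induction n)
      case 0 then show ?case using RIK_base by simp
    next
      case (Suc n)
      have "RI K (-1 - int n - 1) p = Tm \<rho> (RI K (-1 - int n)) p" for p by (rule RIK_step) simp
      moreover have "RI K (-1 - int n) = (\<lambda>_. 0)" using Suc.IH by auto
      ultimately show ?case by (simp add: Tm_zero algebra_simps)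
    qed
    from this[of "nat (-1 - s)"] 2 show ?thesis by simp
  qed
qed

end



context ddK
begin

definition Lk :: "nat \<Rightarrow> 'b opr" where
  "Lk k p q = (\<Sum>l\<le>k. of_nat (k choose l) * (E^^l) (K p (q - int k + int l)))"

lemma Lk0: "Lk 0 p q = K p q" by (simp add: Lk_def)

lemma Lk_pos: "q > int k \<Longrightarrow> Lk k p q = 0"
  unfolding Lk_def by (rule sum.neutral) (auto simp: Kpos ders_0[OF dE])

lemma Lk_bnd: "bnd (-1) (\<lambda>p. Lk k p q)"
  unfolding Lk_def by (intro bnd_sum bnd_scal bnd_Es Kbu)

lemma Lrec: "Lk (Suc k) p q = Lk k p (q - 1) + E (Lk k p q)"
proof -
  define f where "f l = (E^^l) (K p (q - 1 - int k + int l))" for l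
  have 1: "Lk (Suc k) p q = f 0 + (\<Sum>i\<le>k. of_nat (k choose i) * f (Suc i)) + (\<Sum>i\<le>k. of_nat (k choose Suc i) * f (Suc i))"
    unfolding Lk_def sum.atMost_Suc_shift f_def
    by (simp add: sum.distrib algebra_simps)
  have 2: "Lk k p (q - 1) = f 0 + (\<Sum>i\<le>k. of_nat (k choose Suc i) * f (Suc i))"
  proof -
    have "Lk k p (q - 1) = (\<Sum>l\<le>Suc k. of_nat (k choose l) * f l)"
      unfolding Lk_def f_def by (simp add: binomial_eq_0)
    also have "\<dots> = f 0 + (\<Sum>i\<le>k. of_nat (k choose Suc i) * f (Suc i))"
      unfolding sum.atMost_Suc_shift by simp
    finally show ?thesis .
  qed
  have 3: "E (Lk k p q) = (\<Sum>i\<le>k. of_nat (k choose i) * f (Suc i))"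
    unfolding Lk_def f_def der_sum[OF dE]
    by (rule sum.cong[OF refl]) (simp add: der_mult[OF dE] der_of_nat[OF dE] algebra_simps)
  show ?thesis unfolding 1 2 3 by (simp add: algebra_simps)
qed

lemma RIL_step: "RI (Lk (Suc k)) s p = E (RI (Lk k) s p) + RI (Lk k) (s - 1) p"
proof -
  define B0 where "B0 = nat (int k + 1 - s)"
  define c where "c l = (of_int (ibinom (s + int l) l) :: 'b)" for l
  define a where "a l = rmul (\<lambda>p'. Lk k p' (s + int l)) ((E^^l) \<rho>) p" for l
  define e where "e l = E (rmul (\<lambda>p'. Lk k p' (s + int l + 1)) ((E^^l) \<rho>) p)" for l
  have R1: "RI (Lk (Suc k)) s p = Lk (Suc k) (p - 1) s + (\<Sum>l<Suc B0. c l *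
      rmul (\<lambda>p'. Lk (Suc k) p' (s + int l + 1)) ((E^^l) \<rho>) p)"
    unfolding c_def by (rule RI_fin[of "int k + 1"]) (auto simp: Lk_pos B0_def)
  have R2: "RI (Lk k) s p = Lk k (p - 1) s + (\<Sum>l<Suc B0. c l *
      rmul (\<lambda>p'. Lk k p' (s + int l + 1)) ((E^^l) \<rho>) p)"
    unfolding c_def by (rule RI_fin[of "int k"]) (auto simp: Lk_pos B0_def)
  have R3: "RI (Lk k) (s - 1) p = Lk k (p - 1) (s - 1) + (\<Sum>l<Suc B0. of_int (ibinom (s - 1 + int l) l) *
      rmul (\<lambda>p'. Lk k p' (s - 1 + int l + 1)) ((E^^l) \<rho>) p)"
    by (rule RI_fin[of "int k"]) (auto simp: Lk_pos B0_def)
  have R3': "RI (Lk k) (s - 1) p = Lk k (p - 1) (s - 1) + (\<Sum>l<Suc B0. of_int (ibinom (s - 1 + int l) l) * a l)"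
    unfolding R3 a_def by simp
  have T: "rmul (\<lambda>p'. Lk (Suc k) p' (s + int l + 1)) ((E^^l) \<rho>) p = a l + e l - a (Suc l)" for l
  proof -
    have "rmul (\<lambda>p'. Lk (Suc k) p' (s + int l + 1)) ((E^^l) \<rho>) p =
       rmul (\<lambda>p'. Lk k p' (s + int l + 1 - 1) + E (Lk k p' (s + int l + 1))) ((E^^l) \<rho>) p"
      unfolding Lrec ..
    also have "\<dots> = rmul (\<lambda>p'. Lk k p' (s + int l)) ((E^^l) \<rho>) p + rmul (\<lambda>p'. E (Lk k p' (s + int l + 1))) ((E^^l) \<rho>) p"
      using rmul_add[OF Lk_bnd bnd_E[OF Lk_bnd]] by simp
    also have "rmul (\<lambda>p'. E (Lk k p' (s + int l + 1))) ((E^^l) \<rho>) p = e l - a (Suc l)"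
      unfolding e_def a_def E_rmul[OF Lk_bnd] by (simp add: algebra_simps)
    finally show ?thesis unfolding a_def by simp
  qed
  have aB: "a (Suc B0) = 0"
  proof -
    have "(\<lambda>p'. Lk k p' (s + int (Suc B0))) = (\<lambda>_. 0)" by (auto simp: Lk_pos B0_def)
    then show ?thesis unfolding a_def by (simp add: rmul_zero)
  qed
  have tl: "(\<Sum>l<Suc B0. of_int (ibinom (s - 1 + int l) l) * a l) = (\<Sum>l<Suc B0. c l * a l) - (\<Sum>l<Suc B0. c l * a (Suc l))"
    unfolding tele c_def using aB by simp
  have ER: "E (RI (Lk k) s p) = E (Lk k (p - 1) s) + (\<Sum>l<Suc B0. c l * e l)"
    unfolding R2 c_def e_def der_add[OF dE] der_sum[OF dE] by (simp add: der_of_int_mult[OF dE])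
  show ?thesis unfolding R1 ER R3' tl T
    by (simp add: Lrec algebra_simps sum.distrib sum_subtractf del: sum.lessThan_Suc)
qed

lemma RIL: "RI (Lk k) s p = (if s = int k \<and> p = 0 then 1 else 0)"
proof (induction k arbitrary: s p)
  case 0
  have "Lk 0 = K" by (intro ext) (simp add: Lk0)
  then show ?case using RIK by simp
next
  case (Suc k)
  show ?case unfolding RIL_step Suc.IH by (auto simp: der_0[OF dE] der_1[OF dE])
qed

definition Zf :: "nat \<Rightarrow> 'b opr" where "Zf k p q = (if 0 \<le> q then Lk k p (q + 1) else 0)"
definition Yf :: "nat \<Rightarrow> 'b opr" where "Yf k p q = (if q = 0 then Lk k (p - 1) 0 else 0)"

lemma Zf_b: "Zf k i j \<noteq> 0 \<Longrightarrow> i \<le> -1 \<and> 0 \<le> j \<and> j \<le> int k"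
proof -
  assume a: "Zf k i j \<noteq> 0"
  then have "0 \<le> j" "Lk k i (j + 1) \<noteq> 0" by (auto simp: Zf_def split: if_splits)
  moreover have "j \<le> int k" using Lk_pos[of k "j + 1" i] calculation by (cases "j + 1 > int k") auto
  moreover have "i \<le> -1" using Lk_bnd[of k "j + 1"] calculation by (auto simp: bnd_def not_le[symmetric])
  ultimately show ?thesis by auto
qed

lemma exist: "mono 0 (int k) p q - Yf k p q = opm (Zf k) (Hop \<rho>) p q"
proof -
  have O: "opm (Zf k) (Hop \<rho>) p q = Zf k (p-1) (q-1) +
    (\<Sum>l<nat (int k - q + 1). of_int (ibinom (q + int l) l) * rmul (\<lambda>p'. Zf k p' (q + int l)) ((E^^l) \<rho>) p)"
    by (rule opm_ZH) (rule Zf_b)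
  show ?thesis
  proof (cases "0 \<le> q")
    case True
    have R: "RI (Lk k) q p = Lk k (p - 1) q + (\<Sum>l<nat (int k - q + 1). of_int (ibinom (q + int l) l) *
      rmul (\<lambda>p'. Lk k p' (q + int l + 1)) ((E^^l) \<rho>) p)"
      by (rule RI_fin[of "int k"]) (auto simp: Lk_pos)
    have "(\<lambda>p'. Zf k p' (q + int l)) = (\<lambda>p'. Lk k p' (q + int l + 1))" for l
      using True by (auto simp: Zf_def)
    then have "opm (Zf k) (Hop \<rho>) p q = Zf k (p-1) (q-1) + (RI (Lk k) q p - Lk k (p - 1) q)"
      unfolding O R by simp
    then show ?thesis using True unfolding RIL by (auto simp: Zf_def Yf_def mono_def)
  next
    case False
    have "(\<Sum>l<nat (int k - q + 1). of_int (ibinom (q + int l) l) * rmul (\<lambda>p'. Zf k p' (q + int l)) ((E^^l) \<rho>) p) = 0"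
    proof (rule sum.neutral, rule ballI)
      fix l assume "l \<in> {..<nat (int k - q + 1)}"
      show "of_int (ibinom (q + int l) l) * rmul (\<lambda>p'. Zf k p' (q + int l)) ((E^^l) \<rho>) p = 0"
      proof (cases "q + int l < 0")
        case True
        then have "(\<lambda>p'. Zf k p' (q + int l)) = (\<lambda>_. 0)" by (auto simp: Zf_def)
        then show ?thesis by (simp add: rmul_zero)
      next
        case c: False
        then have "ibinom (q + int l) l = 0" using False by (intro ibinom_big) auto
        then show ?thesis by simp
      qed
    qed
    then show ?thesis using False unfolding O by (auto simp: Zf_def Yf_def mono_def)
  qed
qed

end



context dd
begin

lemma opm_ZH_diff:
  assumes Z1b: "\<And>i j. Z1 i j \<noteq> 0 \<Longrightarrow> i \<le> M \<and> 0 \<le> j \<and> j \<le> N"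
    and Z2b: "\<And>i j. Z2 i j \<noteq> 0 \<Longrightarrow> i \<le> M \<and> 0 \<le> j \<and> j \<le> N"
  shows "opm (\<lambda>i j. Z1 i j - Z2 i j) (Hop \<rho>) p q = opm Z1 (Hop \<rho>) p q - opm Z2 (Hop \<rho>) p q"
proof -
  have Wb: "\<And>i j. Z1 i j - Z2 i j \<noteq> 0 \<Longrightarrow> i \<le> M \<and> 0 \<le> j \<and> j \<le> N"
    using Z1b Z2b by (metis diff_self)
  have b1: "bnd M (\<lambda>p'. Z1 p' j)" for j unfolding bnd_def using Z1b by force
  have b2: "bnd M (\<lambda>p'. Z2 p' j)" for j unfolding bnd_def using Z2b by force
  have o1: "opm Z1 (Hop \<rho>) p q = Z1 (p-1) (q-1) +
    (\<Sum>l<nat (N - q + 1). of_int (ibinom (q + int l) l) * rmul (\<lambda>p'. Z1 p' (q + int l)) ((E^^l) \<rho>) p)"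
    by (rule opm_ZH[OF Z1b])
  have o2: "opm Z2 (Hop \<rho>) p q = Z2 (p-1) (q-1) +
    (\<Sum>l<nat (N - q + 1). of_int (ibinom (q + int l) l) * rmul (\<lambda>p'. Z2 p' (q + int l)) ((E^^l) \<rho>) p)"
    by (rule opm_ZH[OF Z2b])
  have o3: "opm (\<lambda>i j. Z1 i j - Z2 i j) (Hop \<rho>) p q = (Z1 (p-1) (q-1) - Z2 (p-1) (q-1)) +
    (\<Sum>l<nat (N - q + 1). of_int (ibinom (q + int l) l) * rmul (\<lambda>p'. Z1 p' (q + int l) - Z2 p' (q + int l)) ((E^^l) \<rho>) p)"
    by (rule opm_ZH[OF Wb])
  show ?thesis
    unfolding o1 o2 o3 rmul_diff[OF b1 b2]
    by (simp add: algebra_simps sum_subtractf)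
qed

lemma uniq:
  assumes Z1b: "\<And>i j. Z1 i j \<noteq> 0 \<Longrightarrow> i \<le> M1 \<and> 0 \<le> j \<and> j \<le> N1"
    and Z2b: "\<And>i j. Z2 i j \<noteq> 0 \<Longrightarrow> i \<le> M2 \<and> 0 \<le> j \<and> j \<le> N2"
    and Y1: "\<And>p q. q \<noteq> 0 \<Longrightarrow> Y1 p q = 0" and Y2: "\<And>p q. q \<noteq> 0 \<Longrightarrow> Y2 p q = 0"
    and e1: "\<And>p q. X p q - Y1 p q = opm Z1 (Hop \<rho>) p q"
    and e2: "\<And>p q. X p q - Y2 p q = opm Z2 (Hop \<rho>) p q"
  shows "Y1 = Y2"
proof -
  define M where "M = max M1 M2"
  define N where "N = max N1 N2"
  have Z1b': "\<And>i j. Z1 i j \<noteq> 0 \<Longrightarrow> i \<le> M \<and> 0 \<le> j \<and> j \<le> N"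
    using Z1b unfolding M_def N_def by fastforce
  have Z2b': "\<And>i j. Z2 i j \<noteq> 0 \<Longrightarrow> i \<le> M \<and> 0 \<le> j \<and> j \<le> N"
    using Z2b unfolding M_def N_def by fastforce
  define W where "W i j = Z1 i j - Z2 i j" for i j
  have Wb: "\<And>i j. W i j \<noteq> 0 \<Longrightarrow> i \<le> M \<and> 0 \<le> j \<and> j \<le> N"
    using Z1b' Z2b' unfolding W_def by (metis diff_self)
  have WH: "opm W (Hop \<rho>) p q = Y2 p q - Y1 p q" for p q
  proof -
    have "W = (\<lambda>i j. Z1 i j - Z2 i j)" by (intro ext) (simp add: W_def)
    then have "opm W (Hop \<rho>) p q = opm Z1 (Hop \<rho>) p q - opm Z2 (Hop \<rho>) p q"
      using opm_ZH_diff[OF Z1b' Z2b'] by simp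
    then show ?thesis unfolding e1[symmetric] e2[symmetric] by simp
  qed
  have W0: "W i j = 0" for i j
  proof (rule ccontr)
    assume nz: "W i j \<noteq> 0"
    define J where "J = {j. \<exists>i. W i j \<noteq> 0}"
    have fJ: "finite J" by (rule finite_subset[of _ "{0..N}"]) (auto simp: J_def dest: Wb)
    have "j \<in> J" using nz by (auto simp: J_def)
    then have mJ: "Max J \<in> J" using fJ by (auto intro: Max_in)
    then obtain i' where i': "W i' (Max J) \<noteq> 0" by (auto simp: J_def)
    have above: "W i'' j' = 0" if "j' > Max J" for i'' j'
    proof (rule ccontr)
      assume "W i'' j' \<noteq> 0" then have "j' \<in> J" by (auto simp: J_def)
      then show False using that fJ by (meson Max_ge leD)
    qed
    have "Max J \<ge> 0" using Wb[OF i'] by simp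
    have o: "opm W (Hop \<rho>) (i' + 1) (Max J + 1) = W i' (Max J) +
      (\<Sum>l<nat (N - (Max J + 1) + 1). of_int (ibinom (Max J + 1 + int l) l) * rmul (\<lambda>p'. W p' (Max J + 1 + int l)) ((E^^l) \<rho>) (i' + 1))"
      using opm_ZH[OF Wb] by simp
    have z: "\<And>l. (\<lambda>p'. W p' (Max J + 1 + int l)) = (\<lambda>_. 0)" using above by auto
    have "opm W (Hop \<rho>) (i' + 1) (Max J + 1) = W i' (Max J)" unfolding o z by (simp add: rmul_zero)
    moreover have "opm W (Hop \<rho>) (i' + 1) (Max J + 1) = 0"
      unfolding WH using Y1 Y2 \<open>Max J \<ge> 0\<close> by simp
    ultimately show False using i' by simp
  qed
  have "Z1 = Z2" using W0 unfolding W_def by (auto intro!: ext)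
  then show ?thesis using e1 e2 by (auto intro!: ext) (metis diff_left_imp_eq)
qed

end

context ddK
begin

lemma EK: assumes "l \<le> k" "1 \<le> k"
  shows "(E^^l) (K p (int l - int k)) = (\<Sum>j\<in>{1..k - l}. of_int (ibinom (- int j) (k - l - j)) * (E^^(k - j)) (V j p 0))"
proof -
  have n: "nat (- (int l - int k)) = k - l" using assms by simp
  have "(E^^l) (if p = -1 \<and> int l - int k = 0 then 1 else 0) = 0"
    using assms by (cases "l = k") (auto simp: ders_1[OF dE] ders_0[OF dE])
  then have "(E^^l) (K p (int l - int k)) = (\<Sum>j\<in>{1..k - l}. (E^^l) (of_int (ibinom (- int j) (k - l - j)) * (E^^(k - l - j)) (V j p 0)))"
    unfolding Kcl n ders_add[OF dE] ders_sum[OF dE] by simp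
  also have "\<dots> = (\<Sum>j\<in>{1..k - l}. of_int (ibinom (- int j) (k - l - j)) * (E^^(k - j)) (V j p 0))"
  proof (rule sum.cong[OF refl])
    fix j assume "j \<in> {1..k - l}"
    then have eq: "l + (k - l - j) = k - j" using assms by auto
    show "(E^^l) (of_int (ibinom (- int j) (k - l - j)) * (E^^(k - l - j)) (V j p 0)) =
      of_int (ibinom (- int j) (k - l - j)) * (E^^(k - j)) (V j p 0)"
    proof -
      have e: "(E^^l) ((E^^(k - l - j)) (V j p 0)) = (E^^(k - j)) (V j p 0)"
        by (metis eq funpow_add comp_apply)
      show ?thesis by (simp only: ders_of_int_mult[OF dE] e)
    qed
  qed
  finally show ?thesis .
qed

lemma Lk_zero: assumes k: "1 \<le> k" shows "Lk k p 0 = (\<Sum>j\<in>{1..k}. (E^^(k - j)) (V j p 0))"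
proof -
  define F where "F l j = of_nat (k choose l) * (of_int (ibinom (- int j) (k - l - j)) * (E^^(k - j)) (V j p 0))" for l j
  have "Lk k p 0 = (\<Sum>l\<le>k. \<Sum>j\<in>{1..k - l}. F l j)"
    unfolding Lk_def F_def
  proof (rule sum.cong[OF refl])
    fix l assume "l \<in> {..k}"
    then have l: "l \<le> k" by simp
    have "0 - int k + int l = int l - int k" by simp
    then show "of_nat (k choose l) * (E^^l) (K p (0 - int k + int l)) = (\<Sum>j\<in>{1..k - l}. of_nat (k choose l) *
        (of_int (ibinom (- int j) (k - l - j)) * (E^^(k - j)) (V j p 0)))"
      by (simp only: EK[OF l k] sum_distrib_left)
  qed
  also have "\<dots> = (\<Sum>l\<in>{..k}. \<Sum>j\<in>{j \<in> {1..k}. j \<le> k - l}. F l j)"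
    by (rule sum.cong[OF refl]) (rule sum.cong, auto)
  also have "\<dots> = (\<Sum>j\<in>{1..k}. \<Sum>l\<in>{l \<in> {..k}. j \<le> k - l}. F l j)"
    by (rule sum.swap_restrict) auto
  also have "\<dots> = (\<Sum>j\<in>{1..k}. (E^^(k - j)) (V j p 0))"
  proof (rule sum.cong[OF refl])
    fix j assume j: "j \<in> {1..k}"
    have "{l \<in> {..k}. j \<le> k - l} = {0..k - j}" using j by auto
    then have "(\<Sum>l\<in>{l \<in> {..k}. j \<le> k - l}. F l j) = (\<Sum>l\<in>{0..k - j}. F l j)" by simp
    also have "\<dots> = of_int (\<Sum>l\<in>{0..k-j}. int (k choose l) * ibinom (- int j) (k - j - l)) * (E^^(k - j)) (V j p 0)"
      unfolding F_def of_int_sum sum_distrib_right by (rule sum.cong[OF refl]) (simp add: algebra_simps)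
    also have "\<dots> = (E^^(k - j)) (V j p 0)" using ibinom_vander[of j k] j by simp
    finally show "(\<Sum>l\<in>{l \<in> {..k}. j \<le> k - l}. F l j) = (E^^(k - j)) (V j p 0)" .
  qed
  finally show ?thesis .
qed

end



theorem mainTheorem11:
  fixes a :: nat and k :: nat
    and d1 d2 :: "'b::comm_ring_1 \<Rightarrow> 'b" and \<rho> :: 'b
    and V :: "nat \<Rightarrow> 'b opr"
  assumes a: "a \<in> {1, 2}"
    and der1: "is_derivation d1" and der2: "is_derivation d2"
    and comm: "\<And>x. d1 (d2 x) = d2 (d1 x)"
    and V0: "\<And>j. 1 \<le> j \<Longrightarrow> V j \<in> E0set"
    and HK: "opmul a d1 d2 (Hop \<rho>) (Kop a d1 d2 V) = mono 0 1"
    and k: "1 \<le> k"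
  shows "proj a d1 d2 \<rho> (mono 0 (int k))
           = opmul a d1 d2 (coef0 (opmul a d1 d2 (mono 0 (int k)) (Kop a d1 d2 V))) (mono 1 0)
       \<and> opmul a d1 d2 (coef0 (opmul a d1 d2 (mono 0 (int k)) (Kop a d1 d2 V))) (mono 1 0)
           = (\<lambda>p q. \<Sum>j = 1..k. opmul a d1 d2 (dcoef a d1 d2 (k - j) (V j)) (mono 1 0) p q)"
proof -
  define D where "D = dA a d1 d2"
  define E where "E = dB a d1 d2"
  have dD: "is_derivation D" using der1 der2 by (simp add: D_def dA_def)
  have dE: "is_derivation E" using der1 der2 by (simp add: E_def dB_def)
  have DE: "D (E x) = E (D x)" for x using comm[of x] by (simp add: D_def E_def dA_def dB_def)
  interpret X0: dd D E by (rule dd.intro[OF dD dE DE])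
  have opm_eq: "opmul a d1 d2 = X0.opm"
  proof (intro ext)
    fix X Y p q show "opmul a d1 d2 X Y p q = X0.opm X Y p q"
      unfolding X0.opm_def by (simp add: opmul_def D_def E_def)
  qed
  have opm_eq': "opmul a d1 d2 X Y p q = X0.opm X Y p q" for X Y p q by (simp add: opm_eq)
  have Kop_eq: "Kop a d1 d2 V = X0.Kf V"
  proof (intro ext)
    fix p q show "Kop a d1 d2 V p q = X0.Kf V p q"
      unfolding X0.Kf_def Kop_def opm_eq by (rule refl)
  qed
  have V0': "V j p q = 0" if "1 \<le> j" "q \<noteq> 0" for j p q
    using V0[OF that(1)] that(2) by (auto simp: E0set_def)
  have Vb: "\<exists>M. \<forall>p q. V j p q \<noteq> 0 \<longrightarrow> p \<le> M" if j1: "1 \<le> j" for j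
  proof -
    obtain M N where "\<forall>i ja. V j i ja \<noteq> 0 \<longrightarrow> i \<le> M \<and> 0 \<le> ja \<and> ja \<le> N"
      using V0[OF j1] unfolding E0set_def Eset_def by blast
    then show ?thesis by blast
  qed
  have HK': "X0.opm (Hop \<rho>) (X0.Kf V) p q = mono 0 1 p q" for p q
    using HK unfolding opm_eq Kop_eq by simp
  interpret X: ddK D E \<rho> V
    by (intro ddK.intro X0.dd_axioms ddK_axioms.intro V0' Vb HK')
  have L: "opmul a d1 d2 (mono 0 (int k)) (Kop a d1 d2 V) = X.Lk k"
    by (intro ext) (simp add: opm_eq Kop_eq X0.opm_monoBk X.Lk_def)
  have Y: "opmul a d1 d2 (coef0 (opmul a d1 d2 (mono 0 (int k)) (Kop a d1 d2 V))) (mono 1 0) = X.Yf k"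
    unfolding L unfolding opm_eq by (intro ext) (simp add: X0.opm_monoA coef0_def X.Yf_def)
  have conj2: "X.Yf k = (\<lambda>p q. \<Sum>j = 1..k. opmul a d1 d2 (dcoef a d1 d2 (k - j) (V j)) (mono 1 0) p q)"
  proof (intro ext)
    fix p q
    have r: "(\<Sum>j = 1..k. opmul a d1 d2 (dcoef a d1 d2 (k - j) (V j)) (mono 1 0) p q)
        = (\<Sum>j = 1..k. (E^^(k - j)) (V j (p - 1) q))"
      unfolding opm_eq by (simp add: X0.opm_monoA dcoef_def E_def[symmetric])
    show "X.Yf k p q = (\<Sum>j = 1..k. opmul a d1 d2 (dcoef a d1 d2 (k - j) (V j)) (mono 1 0) p q)"
    proof (cases "q = 0")
      case True then show ?thesis unfolding r by (simp add: X.Yf_def X.Lk_zero[OF k])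
    next
      case False then show ?thesis unfolding r by (simp add: X.Yf_def V0' ders_0[OF dE])
    qed
  qed
  have YE0: "X.Yf k \<in> E0set"
  proof -
    have "X.Yf k i j \<noteq> 0 \<longrightarrow> i \<le> 0 \<and> 0 \<le> j \<and> j \<le> 0" for i j
    proof
      assume nz: "X.Yf k i j \<noteq> 0"
      then have j: "j = 0" and l: "X.Lk k (i - 1) 0 \<noteq> 0" by (auto simp: X.Yf_def split: if_splits)
      have "i - 1 \<le> -1" using X.Lk_bnd[of k 0] l unfolding bnd_def by (meson not_le)
      then show "i \<le> 0 \<and> 0 \<le> j \<and> j \<le> 0" using j by simp
    qed
    then have "X.Yf k \<in> Eset" unfolding Eset_def by blast
    then show ?thesis unfolding E0set_def by (simp add: X.Yf_def)
  qed
  have ZE: "X.Zf k \<in> Eset" unfolding Eset_def using X.Zf_b by blast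
  have ex: "opsub (mono 0 (int k)) (X.Yf k) = opmul a d1 d2 (X.Zf k) (Hop \<rho>)"
    by (intro ext) (simp add: opsub_def opm_eq X.exist)
  have conj1: "proj a d1 d2 \<rho> (mono 0 (int k)) = X.Yf k"
    unfolding proj_def
  proof (rule the_equality)
    show "X.Yf k \<in> E0set \<and> (\<exists>Z\<in>Eset. opsub (mono 0 (int k)) (X.Yf k) = opmul a d1 d2 Z (Hop \<rho>))"
      using YE0 ZE ex by blast
  next
    fix Y assume "Y \<in> E0set \<and> (\<exists>Z\<in>Eset. opsub (mono 0 (int k)) Y = opmul a d1 d2 Z (Hop \<rho>))"
    then obtain Z where Y0: "Y \<in> E0set" and Z: "Z \<in> Eset" and e: "opsub (mono 0 (int k)) Y = opmul a d1 d2 Z (Hop \<rho>)"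
      by blast
    obtain M N where ZMN: "\<And>i j. Z i j \<noteq> 0 \<Longrightarrow> i \<le> M \<and> 0 \<le> j \<and> j \<le> N" using Z unfolding Eset_def by blast
    have Y1: "\<And>p q. q \<noteq> 0 \<Longrightarrow> Y p q = 0" using Y0 unfolding E0set_def by blast
    have Y2: "\<And>p q. q \<noteq> 0 \<Longrightarrow> X.Yf k p q = 0" by (simp add: X.Yf_def)
    have e1: "\<And>p q. mono 0 (int k) p q - Y p q = X0.opm Z (Hop \<rho>) p q"
      using e unfolding opm_eq opsub_def by metis
    have e2: "\<And>p q. mono 0 (int k) p q - X.Yf k p q = X0.opm (X.Zf k) (Hop \<rho>) p q"
      by (rule X.exist)
    show "Y = X.Yf k" by (rule X0.uniq[OF ZMN X.Zf_b Y1 Y2 e1 e2])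
  qed
  show ?thesis using conj1 conj2 Y by simp
qed



end
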